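(* Let $X$ be a separable Banach space and $(E_n)$ a finite dimensional Markushevich decomposition (FMD) of $X$ with biorthogonal sequence $(F_n)$. The following are equivalent: (1) $(E_n)$ is shrinking, i.e. $\mathrm{span}(F_j:j\in\mathbb N)$ is norm dense in $X^*$; (2) for all $x^*\in X^*$, $\lim_{n\to\infty}\|x^*|_{\mathrm{span}(E_j:j>n)}\|=0$; (3) every bounded sequence $(y_n)$ with $y_n\in\mathrm{span}(E_j:j\in\mathbb N, j\ge n)$ for each $n$ is weakly null.
   Context: A sequence $(E_k)$ of finite dimensional subspaces of $X$ is an FMD of $X$ if, with $F_k=\mathrm{span}(E_j:j\ne k)^\perp=\{f\in X^*: f|_{E_j}=0 \text{ for all } j\neq k\}$ (the biorthogonal sequence), the following hold: (a) $\mathrm{span}(E_k:k\in\mathbb N)$ is dense in $X$; (b) $E_k\cap\overline{\mathrm{span}(E_j:j\ne k)}=\{0\}$ for every $k$; (c) $(F_k)$ is total, i.e. if $x\in X$ and $f(x)=0$ for all $f\in F_k$ and all $k$, then $x=0$. *)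

theory Defs
  imports "HOL-Analysis.Analysis"
begin

text \<open>Real Banach space X = type 'a :: banach; dual X* = 'a \<Rightarrow>L real.\<close>

definition separable_space :: "'a::metric_space itself \<Rightarrow> bool" where
  "separable_space _ \<longleftrightarrow> (\<exists>D::'a set. countable D \<and> closure D = UNIV)"

definition biorth :: "(nat \<Rightarrow> 'a::real_normed_vector set) \<Rightarrow> nat \<Rightarrow> ('a \<Rightarrow>\<^sub>L real) set" where
  "biorth E k = {f. \<forall>j. j \<noteq> k \<longrightarrow> (\<forall>x\<in>E j. blinfun_apply f x = 0)}"

definition FMD :: "(nat \<Rightarrow> 'a::real_normed_vector set) \<Rightarrow> bool" where
  "FMD E \<longleftrightarrow>
     (\<forall>k. subspace (E k) \<and> (\<exists>B. finite B \<and> E k = span B)) \<and>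
     closure (span (\<Union>k. E k)) = UNIV \<and>
     (\<forall>k. E k \<inter> closure (span (\<Union>j\<in>-{k}. E j)) = {0}) \<and>
     (\<forall>x. (\<forall>k. \<forall>f\<in>biorth E k. blinfun_apply f x = 0) \<longrightarrow> x = 0)"

definition shrinking :: "(nat \<Rightarrow> 'a::real_normed_vector set) \<Rightarrow> bool" where
  "shrinking E \<longleftrightarrow> closure (span (\<Union>k. biorth E k)) = UNIV"

definition restr_norm :: "('a::real_normed_vector \<Rightarrow>\<^sub>L real) \<Rightarrow> 'a set \<Rightarrow> real" where
  "restr_norm f S = Sup {\<bar>blinfun_apply f x\<bar> | x. x \<in> S \<and> norm x \<le> 1}"

definition weakly_null :: "(nat \<Rightarrow> 'a::real_normed_vector) \<Rightarrow> bool" where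
  "weakly_null y \<longleftrightarrow> (\<forall>f::'a \<Rightarrow>\<^sub>L real. (\<lambda>n. blinfun_apply f (y n)) \<longlonglongrightarrow> 0)"

end

theory Submission
  imports Defs
begin


definition lin_on :: "'a::real_vector set \<Rightarrow> ('a \<Rightarrow> real) \<Rightarrow> bool" where
  "lin_on T h \<longleftrightarrow> (\<forall>x\<in>T. \<forall>y\<in>T. h (x + y) = h x + h y) \<and> (\<forall>x\<in>T. \<forall>c. h (c *\<^sub>R x) = c * h x)"

definition bnd_on :: "'a::real_normed_vector set \<Rightarrow> ('a \<Rightarrow> real) \<Rightarrow> real \<Rightarrow> bool" where
  "bnd_on T h r \<longleftrightarrow> (\<forall>x\<in>T. \<bar>h x\<bar> \<le> r * norm x)"

lemma subspace_closure':
  fixes W :: "'a::real_normed_vector set"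
  assumes "subspace W" shows "subspace (closure W)"
  unfolding subspace_def
proof (intro conjI ballI allI)
  show "0 \<in> closure W" using assms closure_subset subspace_0 by blast
next
  fix x y assume "x \<in> closure W" "y \<in> closure W"
  then obtain s t where s: "\<forall>n. s n \<in> W" "s \<longlonglongrightarrow> x" and t: "\<forall>n. t n \<in> W" "t \<longlonglongrightarrow> y"
    by (meson closure_sequential)
  have "\<forall>n. s n + t n \<in> W" using s t assms subspace_add by blast
  moreover have "(\<lambda>n. s n + t n) \<longlonglongrightarrow> x + y" using s t by (intro tendsto_add) auto
  ultimately show "x + y \<in> closure W" by (meson closure_sequential)
next
  fix c and x assume "x \<in> closure W"
  then obtain s where s: "\<forall>n. s n \<in> W" "s \<longlonglongrightarrow> x" by (meson closure_sequential)
  have "\<forall>n. c *\<^sub>R s n \<in> W" using s assms subspace_scale by blast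
  moreover have "(\<lambda>n. c *\<^sub>R s n) \<longlonglongrightarrow> c *\<^sub>R x" using s by (intro tendsto_scaleR) auto
  ultimately show "c *\<^sub>R x \<in> closure W" by (meson closure_sequential)
qed

lemma dense_eq:
  fixes U :: "'a::topological_space set" and f g :: "'a \<Rightarrow> 'b::t2_space"
  assumes "closure U = UNIV" "continuous_on UNIV f" "continuous_on UNIV g" "\<And>x. x \<in> U \<Longrightarrow> f x = g x"
  shows "f x = g x"
proof -
  have "closed {x. f x = g x}"
    using assms(2,3) by (simp add: closed_Collect_eq)
  hence "closure U \<subseteq> {x. f x = g x}" using assms(4) by (intro closure_minimal) auto
  thus ?thesis using assms(1) by auto
qed

lemma dense_ext:
  fixes U :: "'a::real_normed_vector set" and g :: "'a \<Rightarrow> real"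
  assumes U: "subspace U" "closure U = UNIV" and lin: "lin_on U g" and bnd: "bnd_on U g r" and r: "r \<ge> 0"
  shows "\<exists>G::'a \<Rightarrow>\<^sub>L real. (\<forall>x\<in>U. blinfun_apply G x = g x) \<and> norm G \<le> r"
proof -
  have sub: "g (x - y) = g x - g y" if "x \<in> U" "y \<in> U" for x y
  proof -
    have "(-1) *\<^sub>R y \<in> U" using that U subspace_scale by blast
    hence "g (x + (-1) *\<^sub>R y) = g x + g ((-1) *\<^sub>R y)" using lin that unfolding lin_on_def by blast
    also have "g ((-1) *\<^sub>R y) = - g y" using lin that unfolding lin_on_def by (metis mult_minus1)
    finally show ?thesis by simp
  qed
  have "r-lipschitz_on U g"
    unfolding lipschitz_on_def
  proof (intro conjI ballI r)
    fix x y assume xy: "x \<in> U" "y \<in> U"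
    have "x - y \<in> U" using xy U subspace_diff by blast
    hence "\<bar>g (x - y)\<bar> \<le> r * norm (x - y)" using bnd unfolding bnd_on_def by blast
    thus "dist (g x) (g y) \<le> r * dist x y" using sub[OF xy] by (simp add: dist_norm dist_real_def)
  qed
  hence uc: "uniformly_continuous_on U g" by (rule lipschitz_on_uniformly_continuous)
  obtain h where h1: "uniformly_continuous_on (closure U) h" and h2: "\<And>x. x \<in> U \<Longrightarrow> g x = h x"
    using uniformly_continuous_on_extension_on_closure[OF uc] by metis
  have hc: "continuous_on UNIV h" using h1 U(2) uniformly_continuous_imp_continuous by fastforce
  have hadd: "h (x + y) = h x + h y" for x y
  proof -
    let ?P = "(\<lambda>p. h (fst p + snd p))" and ?Q = "(\<lambda>p. h (fst p) + h (snd p))"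
    have c1: "continuous_on UNIV ?P"
      by (rule continuous_on_compose2[OF hc]) (auto intro!: continuous_intros)
    have c2: "continuous_on UNIV ?Q"
      by (intro continuous_intros continuous_on_compose2[OF hc]) auto
    have cl: "closure (U \<times> U) = UNIV" by (simp add: closure_Times U(2))
    have "?P p = ?Q p" for p
    proof (rule dense_eq[OF cl c1 c2])
      fix q assume "q \<in> U \<times> U"
      then obtain a b where q: "q = (a, b)" "a \<in> U" "b \<in> U" by auto
      hence "a + b \<in> U" using U subspace_add by blast
      thus "?P q = ?Q q" using q lin h2 unfolding lin_on_def by (metis fst_conv snd_conv)
    qed
    from this[of "(x, y)"] show ?thesis by simp
  qed
  have hscale: "h (c *\<^sub>R x) = c * h x" for c x
  proof -
    have c1: "continuous_on UNIV (\<lambda>x. h (c *\<^sub>R x))"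
      by (rule continuous_on_compose2[OF hc]) (auto intro!: continuous_intros)
    have c2: "continuous_on UNIV (\<lambda>x. c * h x)"
      by (intro continuous_intros hc)
    show ?thesis
    proof (rule dense_eq[OF U(2) c1 c2])
      fix q assume "q \<in> U"
      hence "c *\<^sub>R q \<in> U" using U subspace_scale by blast
      thus "h (c *\<^sub>R q) = c * h q" using \<open>q \<in> U\<close> lin h2 unfolding lin_on_def by metis
    qed
  qed
  have hb: "\<bar>h x\<bar> \<le> r * norm x" for x
  proof -
    have "closed {x. \<bar>h x\<bar> \<le> r * norm x}"
      by (intro closed_Collect_le continuous_intros hc continuous_on_compose2[OF hc]) auto
    hence "closure U \<subseteq> {x. \<bar>h x\<bar> \<le> r * norm x}"
      using bnd h2 unfolding bnd_on_def by (intro closure_minimal) auto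
    thus ?thesis using U(2) by auto
  qed
  have bl: "bounded_linear h"
    by (rule bounded_linear_intro[where K = r]) (use hadd hscale hb in \<open>auto simp: abs_le_iff mult.commute\<close>)
  define G where "G = Blinfun h"
  have Ga: "blinfun_apply G = h" unfolding G_def using bl by (rule bounded_linear_Blinfun_apply)
  have "norm G \<le> r" by (rule norm_blinfun_bound[OF r]) (simp add: Ga hb)
  thus ?thesis using Ga h2 by auto
qed



lemma hb_step:
  fixes T :: "'a::real_normed_vector set" and h :: "'a \<Rightarrow> real"
  assumes T: "subspace T" and lin: "lin_on T h" and bnd: "bnd_on T h r" and r: "r \<ge> 0"
  shows "\<exists>h'. lin_on (span (insert v T)) h' \<and> bnd_on (span (insert v T)) h' r \<and> (\<forall>x\<in>T. h' x = h x)"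
proof (cases "v \<in> T")
  case True
  hence "v \<in> span T" using span_superset by blast
  hence "span (insert v T) = span T" by (rule span_redundant)
  also have "span T = T" using T by (simp add: span_eq_iff)
  finally have "span (insert v T) = T" .
  thus ?thesis using lin bnd by auto
next
  case vT: False
  have hadd: "h (x + y) = h x + h y" if "x \<in> T" "y \<in> T" for x y using lin that unfolding lin_on_def by blast
  have hsc: "h (c *\<^sub>R x) = c * h x" if "x \<in> T" for x c using lin that unfolding lin_on_def by blast
  have hb: "h x \<le> r * norm x" if "x \<in> T" for x using bnd that unfolding bnd_on_def by fastforce
  have key: "h t - r * norm (t - v) \<le> r * norm (s + v) - h s" if "t \<in> T" "s \<in> T" for t s
  proof -
    have "h t + h s = h (t + s)" using hadd that by simp
    also have "\<dots> \<le> r * norm (t + s)" using hb that T subspace_add by blast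
    also have "norm (t + s) \<le> norm (t - v) + norm (s + v)"
      using norm_triangle_ineq[of "t - v" "s + v"] by simp
    hence "r * norm (t + s) \<le> r * norm (t - v) + r * norm (s + v)"
      using r by (metis distrib_left mult_left_mono)
    finally show ?thesis by simp
  qed
  define A where "A = {h t - r * norm (t - v) | t. t \<in> T}"
  define c where "c = Sup A"
  have "0 \<in> T" using T subspace_0 by blast
  have Ane: "A \<noteq> {}" using \<open>0 \<in> T\<close> unfolding A_def by blast
  have Abdd: "bdd_above A" unfolding A_def
    using key[OF _ \<open>0 \<in> T\<close>] by (auto intro!: bdd_aboveI[where M = "r * norm (0 + v) - h 0"])
  have c_ge: "h t - r * norm (t - v) \<le> c" if "t \<in> T" for t
    unfolding c_def using that Abdd by (intro cSup_upper) (auto simp: A_def)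
  have c_le: "c \<le> r * norm (s + v) - h s" if "s \<in> T" for s
    unfolding c_def using that Ane key by (intro cSup_least) (auto simp: A_def)
  have uniq: "a = b" if "x - a *\<^sub>R v \<in> T" "x - b *\<^sub>R v \<in> T" for x a b
  proof (rule ccontr)
    assume "a \<noteq> b"
    have "(x - a *\<^sub>R v) - (x - b *\<^sub>R v) \<in> T" using that T subspace_diff by blast
    hence "(b - a) *\<^sub>R v \<in> T" by (simp add: algebra_simps)
    hence "inverse (b - a) *\<^sub>R ((b - a) *\<^sub>R v) \<in> T" using T subspace_scale by blast
    thus False using \<open>a \<noteq> b\<close> vT by simp
  qed
  define co where "co x = (THE a. x - a *\<^sub>R v \<in> T)" for x
  have co: "co x = a" if "x - a *\<^sub>R v \<in> T" for x a
    unfolding co_def using that uniq by blast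
  have spanI: "span (insert v T) = {x. \<exists>a. x - a *\<^sub>R v \<in> T}"
  proof -
    have "span T = T" using T by (simp add: span_eq_iff)
    thus ?thesis by (simp add: span_insert del: span_eq_iff)
  qed
  define h' where "h' x = h (x - co x *\<^sub>R v) + co x * c" for x
  have h'rep: "h' (t + a *\<^sub>R v) = h t + a * c" if "t \<in> T" for t a
  proof -
    have "co (t + a *\<^sub>R v) = a" using that by (intro co) simp
    thus ?thesis unfolding h'_def by simp
  qed
  have upper: "h t + a * c \<le> r * norm (t + a *\<^sub>R v)" if "t \<in> T" for t a
  proof (cases a "0::real" rule: linorder_cases)
    case equal thus ?thesis using hb that by simp
  next
    case greater
    have s: "inverse a *\<^sub>R t \<in> T" using that T subspace_scale by blast
    have a0: "a \<noteq> 0" using greater by simp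
    have ceq: "t + a *\<^sub>R v = a *\<^sub>R (inverse a *\<^sub>R t + v)"
      using a0 by (simp add: scaleR_add_right)
    have N: "norm (t + a *\<^sub>R v) = a * norm (inverse a *\<^sub>R t + v)"
      unfolding ceq norm_scaleR using greater by simp
    have i1: "a * c \<le> a * (r * norm (inverse a *\<^sub>R t + v) - h (inverse a *\<^sub>R t))"
      using mult_left_mono[OF c_le[OF s], of a] greater by linarith
    have i2: "a * h (inverse a *\<^sub>R t) = h t" using a0 hsc that by simp
    have i3: "r * norm (t + a *\<^sub>R v) = a * (r * norm (inverse a *\<^sub>R t + v))"
      unfolding N by (simp only: mult.left_commute)
    show ?thesis using i1 i2 i3 by (simp only: right_diff_distrib)
  next
    case less
    define b where "b = - a"
    have b: "b > 0" using less b_def by simp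
    have s: "inverse b *\<^sub>R t \<in> T" using that T subspace_scale by blast
    have "h (inverse b *\<^sub>R t) - r * norm (inverse b *\<^sub>R t - v) \<le> c" using c_ge[OF s] .
    hence "b * (h (inverse b *\<^sub>R t) - r * norm (inverse b *\<^sub>R t - v)) \<le> b * c"
      using b by (simp add: mult_left_mono)
    moreover have "b * (r * norm (inverse b *\<^sub>R t - v)) = r * norm (b *\<^sub>R (inverse b *\<^sub>R t - v))"
      using b by simp
    moreover have "b *\<^sub>R (inverse b *\<^sub>R t - v) = t + a *\<^sub>R v"
      using b by (simp add: algebra_simps b_def)
    moreover have "b * h (inverse b *\<^sub>R t) = h t" using b hsc that by simp
    ultimately show ?thesis by (simp add: algebra_simps b_def)
  qed
  have rep: "\<exists>t a. t \<in> T \<and> x = t + a *\<^sub>R v" if xs: "x \<in> span (insert v T)" for x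
  proof -
    obtain a where "x - a *\<^sub>R v \<in> T" using xs unfolding spanI by blast
    thus ?thesis by (intro exI[of _ "x - a *\<^sub>R v"] exI[of _ a]) simp
  qed
  have "lin_on (span (insert v T)) h'"
    unfolding lin_on_def
  proof (intro conjI ballI allI)
    fix x y assume "x \<in> span (insert v T)" "y \<in> span (insert v T)"
    then obtain t a s b where ts: "t \<in> T" "s \<in> T" "x = t + a *\<^sub>R v" "y = s + b *\<^sub>R v" using rep by metis
    have e1: "x + y = (t + s) + (a + b) *\<^sub>R v" using ts by (simp add: algebra_simps)
    have st: "t + s \<in> T" using ts T subspace_add by blast
    have "h' (x + y) = h (t + s) + (a + b) * c" unfolding e1 by (rule h'rep[OF st])
    moreover have "h' x = h t + a * c" unfolding ts(3) by (rule h'rep[OF ts(1)])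
    moreover have "h' y = h s + b * c" unfolding ts(4) by (rule h'rep[OF ts(2)])
    moreover have "h (t + s) = h t + h s" using hadd ts by blast
    ultimately show "h' (x + y) = h' x + h' y" by (simp add: algebra_simps)
  next
    fix x and k :: real assume "x \<in> span (insert v T)"
    then obtain t a where ts: "t \<in> T" "x = t + a *\<^sub>R v" using rep by metis
    have e1: "k *\<^sub>R x = k *\<^sub>R t + (k * a) *\<^sub>R v" using ts by (simp add: algebra_simps)
    have kt: "k *\<^sub>R t \<in> T" using ts T subspace_scale by blast
    have "h' (k *\<^sub>R x) = h (k *\<^sub>R t) + (k * a) * c" unfolding e1 by (rule h'rep[OF kt])
    moreover have "h' x = h t + a * c" unfolding ts(2) by (rule h'rep[OF ts(1)])
    moreover have "h (k *\<^sub>R t) = k * h t" using hsc ts by blast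
    ultimately show "h' (k *\<^sub>R x) = k * h' x" by (simp add: algebra_simps)
  qed
  moreover have "bnd_on (span (insert v T)) h' r"
    unfolding bnd_on_def
  proof
    fix x assume "x \<in> span (insert v T)"
    then obtain t a where ts: "t \<in> T" "x = t + a *\<^sub>R v" using rep by metis
    have m: "- t \<in> T" using ts T subspace_neg by blast
    have "h t + a * c \<le> r * norm x" using upper ts by simp
    moreover have "h (- t) + (- a) * c \<le> r * norm (- t + (- a) *\<^sub>R v)" using upper m by blast
    moreover have "h (- t) = - h t" using hsc[of t "-1"] ts by simp
    moreover have "norm (- t + (- a) *\<^sub>R v) = norm x" using ts
      by (metis minus_add_distrib norm_minus_cancel scaleR_minus_left)
    ultimately show "\<bar>h' x\<bar> \<le> r * norm x" using h'rep ts by (simp add: abs_le_iff)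
  qed
  moreover have "\<forall>x\<in>T. h' x = h x" using h'rep[of _ 0] by simp
  ultimately show ?thesis by blast
qed

lemma hb_fin:
  fixes T :: "'a::real_normed_vector set" and h :: "'a \<Rightarrow> real"
  assumes B: "finite B" and T: "subspace T" and lin: "lin_on T h" and bnd: "bnd_on T h r" and r: "r \<ge> 0"
  shows "\<exists>h'. lin_on (span (T \<union> B)) h' \<and> bnd_on (span (T \<union> B)) h' r \<and> (\<forall>x\<in>T. h' x = h x)"
  using B
proof (induction B rule: finite_induct)
  case empty
  have "span T = T" using T by (simp add: span_eq_iff)
  thus ?case using lin bnd by (intro exI[of _ h]) (simp del: span_eq_iff)
next
  case (insert v B)
  then obtain h1 where h1: "lin_on (span (T \<union> B)) h1" "bnd_on (span (T \<union> B)) h1 r" "\<forall>x\<in>T. h1 x = h x"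
    by blast
  obtain h2 where h2: "lin_on (span (insert v (span (T \<union> B)))) h2"
     "bnd_on (span (insert v (span (T \<union> B)))) h2 r" "\<forall>x\<in>span (T \<union> B). h2 x = h1 x"
    using hb_step[OF subspace_span h1(1,2) r] by blast
  have e: "span (insert v (span (T \<union> B))) = span (T \<union> insert v B)"
  proof -
    have u: "T \<union> insert v B = insert v (T \<union> B)" by auto
    show ?thesis unfolding u span_insert[of v "span (T \<union> B)"] span_insert[of v "T \<union> B"] span_span ..
  qed
  have "\<forall>x\<in>T. h2 x = h x"
  proof
    fix x assume x: "x \<in> T"
    hence "x \<in> span (T \<union> B)" by (intro span_base) simp
    thus "h2 x = h x" using h1(3) h2(3) x by simp
  qed
  thus ?case using h2(1,2) unfolding e by (intro exI[of _ h2]) simp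
qed



lemma sep_sum_subspace:
  fixes B :: "'a::real_normed_vector set"
  assumes "subspace Z"
  shows "subspace {x. \<exists>b\<in>span B. x - b \<in> Z}"
  unfolding subspace_def
proof (intro conjI ballI allI)
  show "0 \<in> {x. \<exists>b\<in>span B. x - b \<in> Z}" using assms span_zero subspace_0 by force
next
  fix x y assume "x \<in> {x. \<exists>b\<in>span B. x - b \<in> Z}" "y \<in> {x. \<exists>b\<in>span B. x - b \<in> Z}"
  then obtain b b' where b: "b \<in> span B" "x - b \<in> Z" "b' \<in> span B" "y - b' \<in> Z" by blast
  have "(x - b) + (y - b') \<in> Z" using b assms subspace_add by blast
  hence "(x + y) - (b + b') \<in> Z" by (simp add: algebra_simps)
  moreover have "b + b' \<in> span B" using b span_add by blast
  ultimately show "x + y \<in> {x. \<exists>b\<in>span B. x - b \<in> Z}" by blast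
next
  fix c and x assume "x \<in> {x. \<exists>b\<in>span B. x - b \<in> Z}"
  then obtain b where b: "b \<in> span B" "x - b \<in> Z" by blast
  have "c *\<^sub>R (x - b) \<in> Z" using b assms subspace_scale by blast
  hence "c *\<^sub>R x - c *\<^sub>R b \<in> Z" by (simp add: algebra_simps)
  moreover have "c *\<^sub>R b \<in> span B" using b span_scale by blast
  ultimately show "c *\<^sub>R x \<in> {x. \<exists>b\<in>span B. x - b \<in> Z}" by blast
qed

lemma fd_sep:
  fixes B :: "'a::real_normed_vector set"
  assumes "finite B"
  shows "\<forall>Z. closed Z \<and> subspace Z \<and> span B \<inter> Z = {0} \<longrightarrow>
     (\<exists>C>0. \<forall>b\<in>span B. \<forall>z\<in>Z. norm b \<le> C * norm (b + z)) \<and> closed {x. \<exists>b\<in>span B. x - b \<in> Z}"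
  using assms
proof (induction B rule: finite_induct)
  case empty
  show ?case
  proof (intro allI impI conjI)
    fix Z :: "'a set" assume Z: "closed Z \<and> subspace Z \<and> span {} \<inter> Z = {0}"
    show "\<exists>C>0. \<forall>b\<in>span {}. \<forall>z\<in>Z. norm b \<le> C * norm (b + z)"
      by (intro exI[of _ 1]) auto
    have "{x. \<exists>b\<in>span {}. x - b \<in> Z} = Z" by auto
    thus "closed {x. \<exists>b\<in>span {}. x - b \<in> Z}" using Z by simp
  qed
next
  case (insert v B)
  show ?case
  proof (cases "v \<in> span B")
    case True
    hence "span (insert v B) = span B" by (rule span_redundant)
    thus ?thesis using insert.IH by simp
  next
    case vB: False
    show ?thesis
    proof (intro allI impI)
      fix Z :: "'a set" assume Z: "closed Z \<and> subspace Z \<and> span (insert v B) \<inter> Z = {0}"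
      have sub: "span B \<subseteq> span (insert v B)" by (intro span_mono) auto
      have "span B \<inter> Z \<subseteq> {0}" using Z sub by blast
      moreover have "0 \<in> span B" "0 \<in> Z" using Z span_zero subspace_0 by auto
      ultimately have "span B \<inter> Z = {0}" by blast
      hence ih: "(\<exists>C>0. \<forall>b\<in>span B. \<forall>z\<in>Z. norm b \<le> C * norm (b + z)) \<and> closed {x. \<exists>b\<in>span B. x - b \<in> Z}"
        using Z by (intro insert.IH[rule_format]) simp
      then obtain C' where C': "C' > 0" "\<forall>b\<in>span B. \<forall>z\<in>Z. norm b \<le> C' * norm (b + z)"
        by blast
      have clZ': "closed {x. \<exists>b\<in>span B. x - b \<in> Z}" using ih by blast
      define Z' where "Z' = {x. \<exists>b\<in>span B. x - b \<in> Z}"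
      have Z'sub: "subspace Z'" unfolding Z'_def using Z sep_sum_subspace by blast
      have Z'cl: "closed Z'" unfolding Z'_def by (rule clZ')
      have vZ': "v \<notin> Z'"
      proof
        assume "v \<in> Z'"
        then obtain b where b: "b \<in> span B" "v - b \<in> Z" unfolding Z'_def by blast
        have "b \<in> span (insert v B)" using b sub by blast
        moreover have "v \<in> span (insert v B)" by (rule span_base) simp
        ultimately have "v - b \<in> span (insert v B)" by (intro span_diff)
        hence "v - b = 0" using b Z by blast
        thus False using b vB by simp
      qed
      have "\<not> (\<forall>\<epsilon>>0. \<exists>y\<in>Z'. dist y v < \<epsilon>)" using closed_approachable[OF Z'cl, of v] vZ' by blast
      then obtain \<delta> where d0: "\<delta> > 0" "\<forall>y\<in>Z'. \<not> dist y v < \<delta>" by blast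
      hence d: "\<delta> > 0" "\<forall>y\<in>Z'. \<delta> \<le> dist y v" by (auto simp: not_less)
      have G: "\<bar>a\<bar> * \<delta> \<le> norm (a *\<^sub>R v + y)" if "y \<in> Z'" for a y
      proof (cases "a = 0")
        case True thus ?thesis by simp
      next
        case False
        have "(- inverse a) *\<^sub>R y \<in> Z'" using that Z'sub subspace_scale by blast
        hence "\<delta> \<le> norm ((- inverse a) *\<^sub>R y - v)" using d by (simp add: dist_norm)
        hence "\<bar>a\<bar> * \<delta> \<le> \<bar>a\<bar> * norm ((- inverse a) *\<^sub>R y - v)" by (simp add: mult_left_mono)
        also have "\<dots> = norm ((- a) *\<^sub>R ((- inverse a) *\<^sub>R y - v))" by simp
        also have "(- a) *\<^sub>R ((- inverse a) *\<^sub>R y - v) = a *\<^sub>R v + y"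
          using False by (simp add: algebra_simps)
        finally show ?thesis .
      qed
      have spI: "span (insert v B) = {x. \<exists>k. x - k *\<^sub>R v \<in> span B}" by (rule span_insert)
      define C where "C = C' + (C' + 1) * norm v / \<delta> + 1"
      have Cpos: "C > 0" unfolding C_def using C'(1) d(1) by (simp add: add_pos_nonneg)
      have part1: "\<forall>b\<in>span (insert v B). \<forall>z\<in>Z. norm b \<le> C * norm (b + z)"
      proof (intro ballI)
        fix b z assume b: "b \<in> span (insert v B)" and z: "z \<in> Z"
        obtain a where a: "b - a *\<^sub>R v \<in> span B" using b spI by blast
        define b' where "b' = b - a *\<^sub>R v"
        define N where "N = norm (b + z)"
        have "b' + z \<in> Z'" unfolding Z'_def using a z b'_def by force
        hence "\<bar>a\<bar> * \<delta> \<le> norm (a *\<^sub>R v + (b' + z))" by (rule G)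
        also have "a *\<^sub>R v + (b' + z) = b + z" unfolding b'_def by simp
        finally have aN: "\<bar>a\<bar> * \<delta> \<le> N" unfolding N_def .
        hence aN': "\<bar>a\<bar> \<le> N / \<delta>" using d(1) by (simp add: field_simps)
        have av: "\<bar>a\<bar> * norm v \<le> N * norm v / \<delta>"
          using mult_right_mono[OF aN' norm_ge_zero[of v]] by simp
        have "norm b' \<le> C' * norm (b' + z)" using C'(2) a z b'_def by blast
        also have "norm (b' + z) \<le> N + \<bar>a\<bar> * norm v"
        proof -
          have "b' + z = (b + z) - a *\<^sub>R v" unfolding b'_def by simp
          hence "norm (b' + z) \<le> norm (b + z) + norm (a *\<^sub>R v)" by (metis norm_triangle_ineq4)
          thus ?thesis unfolding N_def by simp
        qed
        hence "C' * norm (b' + z) \<le> C' * (N + \<bar>a\<bar> * norm v)" using C'(1) by (simp add: mult_left_mono)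
        finally have b'N: "norm b' \<le> C' * N + C' * (\<bar>a\<bar> * norm v)" by (simp add: algebra_simps)
        have "C' * (\<bar>a\<bar> * norm v) \<le> C' * (N * norm v / \<delta>)" using mult_left_mono[OF av, of C'] C'(1) by simp
        hence b'N2: "norm b' \<le> C' * N + C' * (N * norm v / \<delta>)" using b'N by linarith
        have "norm b \<le> norm b' + norm (a *\<^sub>R v)"
        proof -
          have "b = b' + a *\<^sub>R v" unfolding b'_def by simp
          thus ?thesis by (metis norm_triangle_ineq)
        qed
        hence "norm b \<le> C' * N + C' * (N * norm v / \<delta>) + N * norm v / \<delta>"
          using b'N2 av by simp
        also have "\<dots> \<le> C * N"
        proof -
          have "C * N = C' * N + C' * (N * norm v / \<delta>) + N * norm v / \<delta> + N"
            unfolding C_def by (simp add: algebra_simps add_divide_distrib)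
          moreover have "N \<ge> 0" unfolding N_def by simp
          ultimately show ?thesis by linarith
        qed
        finally show "norm b \<le> C * norm (b + z)" unfolding N_def .
      qed
      have Seq: "{x. \<exists>b\<in>span (insert v B). x - b \<in> Z} = {x. \<exists>a. x - a *\<^sub>R v \<in> Z'}"
      proof (intro set_eqI iffI; simp only: mem_Collect_eq)
        fix x assume "\<exists>b\<in>span (insert v B). x - b \<in> Z"
        then obtain b where b: "b \<in> span (insert v B)" "x - b \<in> Z" by blast
        obtain a where a: "b - a *\<^sub>R v \<in> span B" using b spI by blast
        have "(x - a *\<^sub>R v) - (b - a *\<^sub>R v) \<in> Z" using b by simp
        thus "\<exists>a. x - a *\<^sub>R v \<in> Z'" unfolding Z'_def using a by blast
      next
        fix x assume "\<exists>a. x - a *\<^sub>R v \<in> Z'"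
        then obtain a b where ab: "b \<in> span B" "x - a *\<^sub>R v - b \<in> Z" unfolding Z'_def by blast
        have "a *\<^sub>R v + b \<in> span (insert v B)"
          using ab sub by (meson insertI1 span_add span_base span_scale subsetD)
        moreover have "x - (a *\<^sub>R v + b) \<in> Z" using ab(2) by (simp add: algebra_simps)
        ultimately show "\<exists>b\<in>span (insert v B). x - b \<in> Z" by blast
      qed
      have part2: "closed {x. \<exists>a. x - a *\<^sub>R v \<in> Z'}"
        unfolding closed_sequential_limits
      proof (intro allI impI, elim conjE)
        fix s l assume s: "\<forall>n. s n \<in> {x. \<exists>a. x - a *\<^sub>R v \<in> Z'}" and sl: "s \<longlonglongrightarrow> l"
        have "\<forall>n. \<exists>a. s n - a *\<^sub>R v \<in> Z'" using s by blast
        then obtain a where a0: "\<forall>n. s n - a n *\<^sub>R v \<in> Z'" by (rule choice[THEN exE]) blast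
        hence a: "\<And>n. s n - a n *\<^sub>R v \<in> Z'" by blast
        have ca: "Cauchy a"
        proof (rule CauchyI)
          fix e :: real assume e: "e > 0"
          obtain M where M: "\<forall>m\<ge>M. \<forall>n\<ge>M. norm (s m - s n) < e * \<delta>"
            using CauchyD[OF LIMSEQ_imp_Cauchy[OF sl], of "e * \<delta>"] e d(1) by auto
          have "norm (a m - a n) < e" if "m \<ge> M" "n \<ge> M" for m n
          proof -
            have y: "(s m - a m *\<^sub>R v) - (s n - a n *\<^sub>R v) \<in> Z'" using a Z'sub subspace_diff by blast
            have "\<bar>a m - a n\<bar> * \<delta> \<le> norm ((a m - a n) *\<^sub>R v + ((s m - a m *\<^sub>R v) - (s n - a n *\<^sub>R v)))"
              by (rule G[OF y])
            also have "(a m - a n) *\<^sub>R v + ((s m - a m *\<^sub>R v) - (s n - a n *\<^sub>R v)) = s m - s n"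
              by (simp add: algebra_simps)
            finally have i1: "\<bar>a m - a n\<bar> * \<delta> \<le> norm (s m - s n)" .
            have "norm (s m - s n) < e * \<delta>" using M that by blast
            with i1 have "\<bar>a m - a n\<bar> * \<delta> < e * \<delta>" by linarith
            thus ?thesis using d(1) by simp
          qed
          thus "\<exists>M. \<forall>m\<ge>M. \<forall>n\<ge>M. norm (a m - a n) < e" by blast
        qed
        then obtain \<alpha> where al: "a \<longlonglongrightarrow> \<alpha>" using Cauchy_convergent_iff convergent_def by blast
        have "(\<lambda>n. s n - a n *\<^sub>R v) \<longlonglongrightarrow> l - \<alpha> *\<^sub>R v"
          using sl al by (intro tendsto_intros) auto
        hence "l - \<alpha> *\<^sub>R v \<in> Z'"
          using Z'cl[unfolded closed_sequential_limits, rule_format, OF conjI[OF a0]] by blast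
        thus "l \<in> {x. \<exists>a. x - a *\<^sub>R v \<in> Z'}" by blast
      qed
      show "(\<exists>C>0. \<forall>b\<in>span (insert v B). \<forall>z\<in>Z. norm b \<le> C * norm (b + z)) \<and>
            closed {x. \<exists>b\<in>span (insert v B). x - b \<in> Z}"
      proof (rule conjI)
        show "\<exists>C>0. \<forall>b\<in>span (insert v B). \<forall>z\<in>Z. norm b \<le> C * norm (b + z)"
          using part1 Cpos by blast
        show "closed {x. \<exists>b\<in>span (insert v B). x - b \<in> Z}" unfolding Seq by (rule part2)
      qed
    qed
  qed
qed



lemma ker_sub: "subspace {x. blinfun_apply (g::'a::real_normed_vector \<Rightarrow>\<^sub>L real) x = 0}"
  unfolding subspace_def by (simp add: blinfun.add_right blinfun.scaleR_right)

lemma blin_lin: "lin_on T (blinfun_apply (g::'a::real_normed_vector \<Rightarrow>\<^sub>L real))"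
  unfolding lin_on_def by (simp add: blinfun.add_right blinfun.scaleR_right)

lemma blin_cont: "continuous_on A (blinfun_apply (g::'a::real_normed_vector \<Rightarrow>\<^sub>L real))"
  by (rule linear_continuous_on[OF blinfun.bounded_linear_right])

lemma vanish_span:
  assumes "\<And>x. x \<in> A \<Longrightarrow> blinfun_apply g x = 0" "y \<in> span A"
  shows "blinfun_apply (g::'a::real_normed_vector \<Rightarrow>\<^sub>L real) y = 0"
proof -
  have "span A \<subseteq> {x. blinfun_apply g x = 0}" using assms(1) by (intro span_minimal ker_sub) auto
  thus ?thesis using assms(2) by blast
qed

lemma vanish_dense:
  assumes "\<And>x. x \<in> A \<Longrightarrow> blinfun_apply g x = 0" "closure (span A) = UNIV"
  shows "blinfun_apply (g::'a::real_normed_vector \<Rightarrow>\<^sub>L real) y = 0"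
  by (rule dense_eq[OF assms(2) blin_cont, where g = "\<lambda>_. 0"]) (auto intro: vanish_span[OF assms(1)])

lemma B1:
  fixes E :: "nat \<Rightarrow> 'a::banach set" and \<phi> :: "'a \<Rightarrow>\<^sub>L real"
  assumes F: "FMD E"
  shows "\<exists>\<psi>\<in>biorth E k. \<forall>x\<in>E k. blinfun_apply \<psi> x = blinfun_apply \<phi> x"
proof -
  have F1: "\<forall>k. subspace (E k) \<and> (\<exists>B. finite B \<and> E k = span B)"
    using F unfolding FMD_def by (elim conjE) assumption
  have F2: "closure (span (\<Union>k. E k)) = UNIV"
    using F unfolding FMD_def by (elim conjE) assumption
  have F3: "\<forall>k. E k \<inter> closure (span (\<Union>j\<in>-{k}. E j)) = {0}"
    using F unfolding FMD_def by (elim conjE) assumption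
  have "\<exists>B. finite B \<and> E k = span B" using F1 by blast
  then obtain Bk where Bk: "finite Bk" "E k = span Bk" by blast
  define W where "W = span (\<Union>j\<in>-{k}. E j)"
  have Wsub: "subspace W" unfolding W_def by simp
  have Zcl: "closed (closure W)" by simp
  have Zsub: "subspace (closure W)" using Wsub by (rule subspace_closure')
  have "E k \<inter> closure W = {0}" unfolding W_def using F3 by (rule spec)
  hence EZ: "span Bk \<inter> closure W = {0}" using Bk(2) by simp
  have "(\<exists>C>0. \<forall>b\<in>span Bk. \<forall>z\<in>closure W. norm b \<le> C * norm (b + z)) \<and> closed {x. \<exists>b\<in>span Bk. x - b \<in> closure W}"
    using fd_sep[OF Bk(1), rule_format, of "closure W"] Zcl Zsub EZ by blast
  then obtain C where C: "C > 0" "\<forall>b\<in>span Bk. \<forall>z\<in>closure W. norm b \<le> C * norm (b + z)"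
    by blast
  define U where "U = {x. \<exists>b\<in>span Bk. x - b \<in> W}"
  have Usub: "subspace U" unfolding U_def using Wsub by (rule sep_sum_subspace)
  have EU: "E j \<subseteq> U" for j
  proof
    fix x assume x: "x \<in> E j"
    show "x \<in> U"
    proof (cases "j = k")
      case True
      hence "x \<in> span Bk" using x Bk by simp
      moreover have "x - x \<in> W" using Wsub subspace_0 by simp
      ultimately show ?thesis unfolding U_def by blast
    next
      case False
      hence "x \<in> W" unfolding W_def using x by (intro span_base) blast
      moreover have "(0::'a) \<in> span Bk" by (rule span_zero)
      ultimately show ?thesis unfolding U_def by force
    qed
  qed
  have Ucl: "closure U = UNIV"
  proof -
    have "span (\<Union>j. E j) \<subseteq> U" using EU Usub by (intro span_minimal) auto
    hence "closure (span (\<Union>j. E j)) \<subseteq> closure U" by (rule closure_mono)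
    moreover have "closure (span (\<Union>j. E j)) = UNIV" using F2 by simp
    ultimately show ?thesis by blast
  qed
  have uniq: "e = e'" if "e \<in> span Bk" "e' \<in> span Bk" "x - e \<in> W" "x - e' \<in> W" for x e e'
  proof -
    have "(x - e') - (x - e) \<in> W" using that Wsub subspace_diff by blast
    hence "e - e' \<in> W" by simp
    hence "e - e' \<in> closure W" using closure_subset by blast
    moreover have "e - e' \<in> span Bk" using that span_diff by blast
    ultimately have "e - e' = 0" using EZ by blast
    thus ?thesis by simp
  qed
  define pr where "pr x = (THE e. e \<in> span Bk \<and> x - e \<in> W)" for x
  have pr: "pr x = e" if "e \<in> span Bk" "x - e \<in> W" for x e
    unfolding pr_def using that uniq by blast
  define \<psi>0 where "\<psi>0 x = blinfun_apply \<phi> (pr x)" for x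
  have lin: "lin_on U \<psi>0"
    unfolding lin_on_def
  proof (intro conjI ballI allI)
    fix x y assume "x \<in> U" "y \<in> U"
    then obtain e e' where e: "e \<in> span Bk" "x - e \<in> W" "e' \<in> span Bk" "y - e' \<in> W" unfolding U_def by blast
    have "(x - e) + (y - e') \<in> W" using e Wsub subspace_add by blast
    hence "(x + y) - (e + e') \<in> W" by (simp add: algebra_simps)
    moreover have "e + e' \<in> span Bk" using e span_add by blast
    ultimately have "pr (x + y) = e + e'" by (rule pr[rotated])
    thus "\<psi>0 (x + y) = \<psi>0 x + \<psi>0 y" unfolding \<psi>0_def pr[OF e(1,2)] pr[OF e(3,4)] by (simp add: blinfun.add_right)
  next
    fix x and c :: real assume "x \<in> U"
    then obtain e where e: "e \<in> span Bk" "x - e \<in> W" unfolding U_def by blast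
    have "c *\<^sub>R (x - e) \<in> W" using e Wsub subspace_scale by blast
    hence "c *\<^sub>R x - c *\<^sub>R e \<in> W" by (simp add: algebra_simps)
    moreover have "c *\<^sub>R e \<in> span Bk" using e span_scale by blast
    ultimately have "pr (c *\<^sub>R x) = c *\<^sub>R e" by (rule pr[rotated])
    thus "\<psi>0 (c *\<^sub>R x) = c * \<psi>0 x" unfolding \<psi>0_def pr[OF e(1,2)] by (simp add: blinfun.scaleR_right)
  qed
  have bnd: "bnd_on U \<psi>0 (norm \<phi> * C)"
    unfolding bnd_on_def
  proof
    fix x assume "x \<in> U"
    then obtain e where e: "e \<in> span Bk" "x - e \<in> W" unfolding U_def by blast
    have "x - e \<in> closure W" using e closure_subset by blast
    hence ne: "norm e \<le> C * norm (e + (x - e))" using C e by blast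
    have "\<bar>\<psi>0 x\<bar> = \<bar>blinfun_apply \<phi> e\<bar>" unfolding \<psi>0_def pr[OF e(1,2)] ..
    also have "\<dots> \<le> norm \<phi> * norm e" using norm_blinfun[of \<phi> e] by simp
    also have "\<dots> \<le> norm \<phi> * (C * norm x)" using ne by (simp add: mult_left_mono)
    finally show "\<bar>\<psi>0 x\<bar> \<le> norm \<phi> * C * norm x" by (simp add: mult.assoc)
  qed
  have "norm \<phi> * C \<ge> 0" using C(1) by simp
  then obtain G where G: "\<forall>x\<in>U. blinfun_apply G x = \<psi>0 x"
    using dense_ext[OF Usub Ucl lin bnd] by blast
  have "G \<in> biorth E k"
    unfolding biorth_def
  proof (intro CollectI allI impI ballI)
    fix j x assume j: "j \<noteq> k" and x: "x \<in> E j"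
    have xW: "x \<in> W" unfolding W_def using x j by (intro span_base) blast
    have "x - 0 \<in> W" using xW by simp
    hence "pr x = 0" using pr[of 0 x] span_zero by blast
    moreover have "x \<in> U" using EU x by blast
    ultimately show "blinfun_apply G x = 0" using G unfolding \<psi>0_def by simp
  qed
  moreover have "\<forall>x\<in>E k. blinfun_apply G x = blinfun_apply \<phi> x"
  proof
    fix x assume x: "x \<in> E k"
    have "x \<in> span Bk" using x Bk by simp
    moreover have "x - x \<in> W" using Wsub subspace_0 by simp
    ultimately have "pr x = x" by (rule pr)
    moreover have "x \<in> U" using EU x by blast
    ultimately show "blinfun_apply G x = blinfun_apply \<phi> x" using G unfolding \<psi>0_def by simp
  qed
  ultimately show ?thesis by blast
qed

lemma Bmain:
  fixes E :: "nat \<Rightarrow> 'a::banach set" and \<phi> :: "'a \<Rightarrow>\<^sub>L real"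
  assumes F: "FMD E" and van: "\<And>j x. j > n \<Longrightarrow> x \<in> E j \<Longrightarrow> blinfun_apply \<phi> x = 0"
  shows "\<phi> \<in> span (\<Union>k. biorth E k)"
proof -
  have "\<forall>k. \<exists>\<psi>. \<psi> \<in> biorth E k \<and> (\<forall>x\<in>E k. blinfun_apply \<psi> x = blinfun_apply \<phi> x)"
    using B1[OF F] by blast
  then obtain \<Psi> where \<Psi>: "\<And>k. \<Psi> k \<in> biorth E k" "\<And>k x. x \<in> E k \<Longrightarrow> blinfun_apply (\<Psi> k) x = blinfun_apply \<phi> x"
    by metis
  define D where "D = \<phi> - sum \<Psi> {..n}"
  have Dz: "blinfun_apply D x = 0" if xU: "x \<in> (\<Union>j. E j)" for x
  proof -
    obtain j where x: "x \<in> E j" using xU by blast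
    have k: "blinfun_apply (\<Psi> k) x = (if k = j then blinfun_apply \<phi> x else 0)" for k
    proof (cases "k = j")
      case True thus ?thesis using \<Psi>(2) x by simp
    next
      case False thus ?thesis using \<Psi>(1)[of k] x unfolding biorth_def by auto
    qed
    have "blinfun_apply D x = blinfun_apply \<phi> x - (\<Sum>k\<in>{..n}. blinfun_apply (\<Psi> k) x)"
      unfolding D_def by (simp add: blinfun.diff_left blinfun.sum_left)
    also have "\<dots> = blinfun_apply \<phi> x - (if j \<in> {..n} then blinfun_apply \<phi> x else 0)"
      unfolding k by (simp add: sum.delta')
    also have "\<dots> = 0" using van[of j x] x by auto
    finally show ?thesis .
  qed
  have "blinfun_apply D x = 0" for x
  proof (rule vanish_dense[OF Dz])
    show "closure (span (\<Union>j. E j)) = UNIV" using F unfolding FMD_def by (elim conjE) assumption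
  qed
  hence "D = 0" by (intro blinfun_eqI) simp
  hence "\<phi> = sum \<Psi> {..n}" unfolding D_def by simp
  also have "\<dots> \<in> span (\<Union>k. biorth E k)"
    using \<Psi>(1) by (intro span_sum span_base) blast
  finally show ?thesis .
qed



lemma rn_bdd: fixes f :: "'a::real_normed_vector \<Rightarrow>\<^sub>L real" shows "bdd_above {\<bar>blinfun_apply f x\<bar> | x. x \<in> S \<and> norm x \<le> 1}"
  unfolding bdd_above_def
proof (intro exI[of _ "norm f"] ballI)
  fix y assume "y \<in> {\<bar>blinfun_apply f x\<bar> | x. x \<in> S \<and> norm x \<le> 1}"
  then obtain x where x: "y = \<bar>blinfun_apply f x\<bar>" "norm x \<le> 1" by blast
  have "\<bar>blinfun_apply f x\<bar> \<le> norm f * norm x" using norm_blinfun[of f x] by simp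
  also have "\<dots> \<le> norm f * 1" using x(2) by (intro mult_left_mono) auto
  finally show "y \<le> norm f" using x by simp
qed

lemma rn_upper: fixes f :: "'a::real_normed_vector \<Rightarrow>\<^sub>L real" shows "x \<in> S \<Longrightarrow> norm x \<le> 1 \<Longrightarrow> \<bar>blinfun_apply f x\<bar> \<le> restr_norm f S"
  unfolding restr_norm_def by (rule cSup_upper[OF _ rn_bdd]) blast

lemma rn_nonneg: fixes f :: "'a::real_normed_vector \<Rightarrow>\<^sub>L real" shows "0 \<in> S \<Longrightarrow> 0 \<le> restr_norm f S"
  using rn_upper[of 0 S f] by simp

lemma rn_least:
  fixes f :: "'a::real_normed_vector \<Rightarrow>\<^sub>L real"
  assumes "0 \<in> S" "\<And>x. x \<in> S \<Longrightarrow> norm x \<le> 1 \<Longrightarrow> \<bar>blinfun_apply f x\<bar> \<le> b"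
  shows "restr_norm f S \<le> b"
  unfolding restr_norm_def
proof (rule cSup_least)
  show "{\<bar>blinfun_apply f x\<bar> | x. x \<in> S \<and> norm x \<le> 1} \<noteq> {}" using assms(1) by force
next
  fix y assume "y \<in> {\<bar>blinfun_apply f x\<bar> | x. x \<in> S \<and> norm x \<le> 1}"
  then obtain x where x: "y = \<bar>blinfun_apply f x\<bar>" "x \<in> S" "norm x \<le> 1" by blast
  thus "y \<le> b" using assms(2)[OF x(2,3)] by simp
qed

lemma rn_scaled:
  fixes f :: "'a::real_normed_vector \<Rightarrow>\<^sub>L real"
  assumes "subspace S" "x \<in> S"
  shows "\<bar>blinfun_apply f x\<bar> \<le> restr_norm f S * norm x"
proof (cases "x = 0")
  case True thus ?thesis by simp
next
  case False
  have "inverse (norm x) *\<^sub>R x \<in> S" using assms subspace_scale by blast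
  moreover have "norm (inverse (norm x) *\<^sub>R x) \<le> 1" using False by simp
  ultimately have "\<bar>blinfun_apply f (inverse (norm x) *\<^sub>R x)\<bar> \<le> restr_norm f S" by (rule rn_upper)
  hence "inverse (norm x) * \<bar>blinfun_apply f x\<bar> \<le> restr_norm f S"
    by (simp add: blinfun.scaleR_right abs_mult)
  hence "norm x * (inverse (norm x) * \<bar>blinfun_apply f x\<bar>) \<le> norm x * restr_norm f S"
    by (intro mult_left_mono) auto
  moreover have "norm x * (inverse (norm x) * \<bar>blinfun_apply f x\<bar>) = \<bar>blinfun_apply f x\<bar>"
    using False by simp
  ultimately show ?thesis by (simp add: mult.commute)
qed

lemma shr_imp_2:
  fixes E :: "nat \<Rightarrow> 'a::banach set"
  assumes sh: "shrinking E"
  shows "(\<lambda>n. restr_norm f (span (\<Union>j\<in>{n<..}. E j))) \<longlonglongrightarrow> 0"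
proof (rule LIMSEQ_I)
  fix r :: real assume r: "r > 0"
  have "f \<in> closure (span (\<Union>k. biorth E k))" using sh unfolding shrinking_def by simp
  then obtain g where g: "g \<in> span (\<Union>k. biorth E k)" "dist g f < r / 2"
    using r unfolding closure_approachable by (meson half_gt_zero)
  define P where "P = {g::'a \<Rightarrow>\<^sub>L real. \<exists>m. \<forall>j>m. \<forall>x\<in>E j. blinfun_apply g x = 0}"
  have Psub: "subspace P"
    unfolding subspace_def P_def
  proof (intro conjI ballI allI; simp only: mem_Collect_eq)
    show "\<exists>m. \<forall>j>m. \<forall>x\<in>E j. blinfun_apply 0 x = 0" by simp
  next
    fix a b :: "'a \<Rightarrow>\<^sub>L real"
    assume "\<exists>m. \<forall>j>m. \<forall>x\<in>E j. blinfun_apply a x = 0" "\<exists>m. \<forall>j>m. \<forall>x\<in>E j. blinfun_apply b x = 0"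
    then obtain m1 m2 where "\<forall>j>m1. \<forall>x\<in>E j. blinfun_apply a x = 0" "\<forall>j>m2. \<forall>x\<in>E j. blinfun_apply b x = 0"
      by blast
    hence "\<forall>j>max m1 m2. \<forall>x\<in>E j. blinfun_apply (a + b) x = 0" by (auto simp add: blinfun.add_left)
    thus "\<exists>m. \<forall>j>m. \<forall>x\<in>E j. blinfun_apply (a + b) x = 0" by blast
  next
    fix c :: real and a :: "'a \<Rightarrow>\<^sub>L real"
    assume "\<exists>m. \<forall>j>m. \<forall>x\<in>E j. blinfun_apply a x = 0"
    then obtain m where "\<forall>j>m. \<forall>x\<in>E j. blinfun_apply a x = 0" by blast
    hence "\<forall>j>m. \<forall>x\<in>E j. blinfun_apply (c *\<^sub>R a) x = 0" by (simp add: blinfun.scaleR_left)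
    thus "\<exists>m. \<forall>j>m. \<forall>x\<in>E j. blinfun_apply (c *\<^sub>R a) x = 0" by blast
  qed
  have "(\<Union>k. biorth E k) \<subseteq> P"
  proof
    fix g assume "g \<in> (\<Union>k. biorth E k)"
    then obtain k where "g \<in> biorth E k" by blast
    hence "\<forall>j>k. \<forall>x\<in>E j. blinfun_apply g x = 0" unfolding biorth_def by auto
    thus "g \<in> P" unfolding P_def by blast
  qed
  hence "span (\<Union>k. biorth E k) \<subseteq> P" using Psub by (rule span_minimal)
  then obtain m where m: "\<forall>j>m. \<forall>x\<in>E j. blinfun_apply g x = 0" using g(1) unfolding P_def by blast
  show "\<exists>no. \<forall>n\<ge>no. norm (restr_norm f (span (\<Union>j\<in>{n<..}. E j)) - 0) < r"
  proof (intro exI allI impI)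
    fix n assume n: "n \<ge> m"
    let ?S = "span (\<Union>j\<in>{n<..}. E j)"
    have gS: "blinfun_apply g x = 0" if "x \<in> ?S" for x
    proof (rule vanish_span[OF _ that])
      fix y assume "y \<in> (\<Union>j\<in>{n<..}. E j)"
      then obtain j where j: "j > n" "y \<in> E j" by auto
      have "j > m" using j n by linarith
      thus "blinfun_apply g y = 0" using m j by blast
    qed
    have "restr_norm f ?S \<le> norm (f - g)"
    proof (rule rn_least)
      show "0 \<in> ?S" by (rule span_zero)
    next
      fix x assume x: "x \<in> ?S" "norm x \<le> 1"
      have "\<bar>blinfun_apply f x\<bar> = \<bar>blinfun_apply (f - g) x\<bar>" using gS[OF x(1)] by (simp add: blinfun.diff_left)
      also have "\<dots> \<le> norm (f - g) * norm x" using norm_blinfun[of "f - g" x] by simp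
      also have "\<dots> \<le> norm (f - g) * 1" using x(2) by (intro mult_left_mono) auto
      finally show "\<bar>blinfun_apply f x\<bar> \<le> norm (f - g)" by simp
    qed
    moreover have "norm (f - g) < r / 2" using g(2) by (simp add: dist_norm norm_minus_commute)
    moreover have "0 \<le> restr_norm f ?S" by (rule rn_nonneg) (rule span_zero)
    ultimately show "norm (restr_norm f ?S - 0) < r" by simp
  qed
qed

lemma two_imp_shr:
  fixes E :: "nat \<Rightarrow> 'a::banach set"
  assumes F: "FMD E" and lim: "\<forall>f::'a \<Rightarrow>\<^sub>L real. (\<lambda>n. restr_norm f (span (\<Union>j\<in>{n<..}. E j))) \<longlonglongrightarrow> 0"
  shows "shrinking E"
  unfolding shrinking_def
proof (intro set_eqI iffI)
  fix f :: "'a \<Rightarrow>\<^sub>L real"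
  show "f \<in> UNIV" by simp
  show "f \<in> closure (span (\<Union>k. biorth E k))"
    unfolding closure_approachable
  proof (intro allI impI)
    fix e :: real assume e: "e > 0"
    have "\<exists>n. restr_norm f (span (\<Union>j\<in>{n<..}. E j)) < e"
    proof -
      have "\<exists>no. \<forall>n\<ge>no. norm (restr_norm f (span (\<Union>j\<in>{n<..}. E j)) - 0) < e"
        using lim e LIMSEQ_D by blast
      then obtain no where "norm (restr_norm f (span (\<Union>j\<in>{no<..}. E j)) - 0) < e" by blast
      hence "restr_norm f (span (\<Union>j\<in>{no<..}. E j)) < e" by simp
      thus ?thesis by blast
    qed
    then obtain n where n: "restr_norm f (span (\<Union>j\<in>{n<..}. E j)) < e" by blast
    define T where "T = span (\<Union>j\<in>{n<..}. E j)"
    define r where "r = restr_norm f T"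
    have r0: "r \<ge> 0" unfolding r_def by (rule rn_nonneg) (simp add: T_def span_zero)
    have Tsub: "subspace T" unfolding T_def by simp
    have bT: "bnd_on T (blinfun_apply f) r"
      unfolding bnd_on_def r_def using rn_scaled[OF Tsub] by blast
    have F1: "\<forall>k. subspace (E k) \<and> (\<exists>B. finite B \<and> E k = span B)"
      using F unfolding FMD_def by (elim conjE) assumption
    have F2: "closure (span (\<Union>k. E k)) = UNIV"
      using F unfolding FMD_def by (elim conjE) assumption
    have "\<forall>k. \<exists>B. finite B \<and> E k = span B" using F1 by blast
    then obtain Bj where Bj: "\<And>k. finite (Bj k)" "\<And>k. E k = span (Bj k)" by metis
    define B where "B = (\<Union>j\<in>{..n}. Bj j)"
    have fB: "finite B" unfolding B_def using Bj(1) by blast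
    obtain h' where h': "lin_on (span (T \<union> B)) h'" "bnd_on (span (T \<union> B)) h' r" "\<forall>x\<in>T. h' x = blinfun_apply f x"
      using hb_fin[OF fB Tsub blin_lin bT r0] by blast
    have EU: "E j \<subseteq> span (T \<union> B)" for j
    proof (cases "j \<le> n")
      case True
      have "Bj j \<subseteq> T \<union> B" unfolding B_def using True by blast
      hence "span (Bj j) \<subseteq> span (T \<union> B)" by (rule span_mono)
      thus ?thesis using Bj(2) by simp
    next
      case False
      have "E j \<subseteq> (\<Union>j\<in>{n<..}. E j)" using False by (intro subsetI UN_I[of j]) auto
      also have "\<dots> \<subseteq> T" unfolding T_def by (rule span_superset)
      finally have "E j \<subseteq> T" .
      also have "T \<subseteq> span (T \<union> B)" by (intro subset_trans[OF _ span_superset]) auto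
      finally show ?thesis .
    qed
    have Ucl: "closure (span (T \<union> B)) = UNIV"
    proof -
      have "span (\<Union>j. E j) \<subseteq> span (T \<union> B)" using EU by (intro span_minimal) auto
      hence "closure (span (\<Union>j. E j)) \<subseteq> closure (span (T \<union> B))" by (rule closure_mono)
      thus ?thesis using F2 by blast
    qed
    obtain G where G: "\<forall>x\<in>span (T \<union> B). blinfun_apply G x = h' x" "norm G \<le> r"
      using dense_ext[OF subspace_span Ucl h'(1,2) r0] by blast
    define \<phi> where "\<phi> = f - G"
    have van: "blinfun_apply \<phi> x = 0" if "j > n" "x \<in> E j" for j x
    proof -
      have xT: "x \<in> T" unfolding T_def using that by (intro span_base) blast
      hence "x \<in> span (T \<union> B)" by (intro span_base) simp
      thus ?thesis unfolding \<phi>_def using G(1) h'(3) xT by (simp add: blinfun.diff_left)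
    qed
    have "\<phi> \<in> span (\<Union>k. biorth E k)" by (rule Bmain[OF F van]) auto
    moreover have "dist \<phi> f < e"
    proof -
      have "dist \<phi> f = norm G" unfolding \<phi>_def dist_norm by simp
      also have "\<dots> < e" using G(2) n unfolding r_def T_def by simp
      finally show ?thesis .
    qed
    ultimately show "\<exists>y\<in>span (\<Union>k. biorth E k). dist y f < e" by blast
  qed
qed


lemma UN_mono_idx: "(\<And>j. j \<in> A \<Longrightarrow> j \<in> B) \<Longrightarrow> (\<Union>j\<in>A. E j) \<subseteq> (\<Union>j\<in>B. E j)"
  by blast

lemma rn_big:
  fixes f :: "'a::real_normed_vector \<Rightarrow>\<^sub>L real"
  assumes "0 \<in> S" "t < restr_norm f S"
  shows "\<exists>x\<in>S. norm x \<le> 1 \<and> t < \<bar>blinfun_apply f x\<bar>"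
proof -
  have ne: "{\<bar>blinfun_apply f x\<bar> | x. x \<in> S \<and> norm x \<le> 1} \<noteq> {}" using assms(1) by force
  have "\<exists>y\<in>{\<bar>blinfun_apply f x\<bar> | x. x \<in> S \<and> norm x \<le> 1}. t < y"
    using assms(2) unfolding restr_norm_def less_cSup_iff[OF ne rn_bdd] .
  thus ?thesis by blast
qed

lemma two_imp_three:
  fixes E :: "nat \<Rightarrow> 'a::banach set"
  assumes lim: "\<forall>f::'a \<Rightarrow>\<^sub>L real. (\<lambda>n. restr_norm f (span (\<Union>j\<in>{n<..}. E j))) \<longlonglongrightarrow> 0"
    and yb: "bounded (range y)" and ys: "\<forall>n. y n \<in> span (\<Union>j\<in>{n..}. E j)"
  shows "weakly_null y"
  unfolding weakly_null_def
proof (intro allI LIMSEQ_I)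
  fix f :: "'a \<Rightarrow>\<^sub>L real" and r :: real assume r: "r > 0"
  obtain M where M: "\<forall>x\<in>range y. norm x \<le> M" using yb unfolding bounded_iff by blast
  define M' where "M' = max M 1"
  have M'pos: "M' > 0" unfolding M'_def by simp
  have yM: "norm (y n) \<le> M'" for n
  proof -
    have "norm (y n) \<le> M" using M by blast
    thus ?thesis unfolding M'_def by linarith
  qed
  obtain no where no: "\<forall>n\<ge>no. norm (restr_norm f (span (\<Union>j\<in>{n<..}. E j)) - 0) < r / M'"
    using LIMSEQ_D[OF lim[rule_format, of f]] r M'pos by (meson divide_pos_pos)
  show "\<exists>no. \<forall>n\<ge>no. norm (blinfun_apply f (y n) - 0) < r"
  proof (intro exI allI impI)
    fix n assume n: "n \<ge> Suc no"
    define m where "m = n - 1"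
    have mno: "m \<ge> no" unfolding m_def using n by simp
    have "(\<Union>j\<in>{n..}. E j) \<subseteq> (\<Union>j\<in>{m<..}. E j)" unfolding m_def using n by (intro UN_mono_idx) auto
    hence "y n \<in> span (\<Union>j\<in>{m<..}. E j)" using ys span_mono by blast
    hence "\<bar>blinfun_apply f (y n)\<bar> \<le> restr_norm f (span (\<Union>j\<in>{m<..}. E j)) * norm (y n)"
      by (intro rn_scaled) simp_all
    also have "\<dots> \<le> restr_norm f (span (\<Union>j\<in>{m<..}. E j)) * M'"
      by (intro mult_left_mono yM rn_nonneg span_zero)
    also have "\<dots> < (r / M') * M'"
    proof -
      have "restr_norm f (span (\<Union>j\<in>{m<..}. E j)) < r / M'" using no mno by fastforce
      thus ?thesis using M'pos by (intro mult_strict_right_mono) auto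
    qed
    also have "\<dots> = r" using M'pos by simp
    finally show "norm (blinfun_apply f (y n) - 0) < r" by simp
  qed
qed

lemma three_imp_two:
  fixes E :: "nat \<Rightarrow> 'a::banach set"
  assumes wn: "\<forall>y::nat \<Rightarrow> 'a. bounded (range y) \<and> (\<forall>n. y n \<in> span (\<Union>j\<in>{n..}. E j)) \<longrightarrow> weakly_null y"
  shows "(\<lambda>n. restr_norm f (span (\<Union>j\<in>{n<..}. E j))) \<longlonglongrightarrow> 0"
proof (rule ccontr)
  let ?R = "\<lambda>n. restr_norm f (span (\<Union>j\<in>{n<..}. E j))"
  assume nl: "\<not> ?R \<longlonglongrightarrow> 0"
  have "\<exists>r>0. \<forall>no. \<exists>n\<ge>no. \<not> norm (?R n - 0) < r"
  proof (rule ccontr)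
    assume "\<not> (\<exists>r>0. \<forall>no. \<exists>n\<ge>no. \<not> norm (?R n - 0) < r)"
    hence "\<And>r. 0 < r \<Longrightarrow> \<exists>no. \<forall>n\<ge>no. norm (?R n - 0) < r" by blast
    hence "?R \<longlonglongrightarrow> 0" by (rule LIMSEQ_I)
    thus False using nl by simp
  qed
  then obtain r where r: "r > 0" "\<forall>no. \<exists>n\<ge>no. \<not> norm (?R n - 0) < r" by blast
  have ex: "\<exists>x. x \<in> span (\<Union>j\<in>{n..}. E j) \<and> norm x \<le> 1 \<and> r / 2 < \<bar>blinfun_apply f x\<bar>" for n
  proof -
    obtain m where m: "m \<ge> n" "\<not> norm (?R m - 0) < r" using r(2) by blast
    have "0 \<le> ?R m" by (rule rn_nonneg) (rule span_zero)
    moreover have "r \<le> \<bar>?R m\<bar>" using m(2) by simp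
    ultimately have "r / 2 < ?R m" using r(1) by linarith
    then obtain x where x: "x \<in> span (\<Union>j\<in>{m<..}. E j)" "norm x \<le> 1" "r / 2 < \<bar>blinfun_apply f x\<bar>"
      using rn_big[OF span_zero] by blast
    have "(\<Union>j\<in>{m<..}. E j) \<subseteq> (\<Union>j\<in>{n..}. E j)" using m(1) by (intro UN_mono_idx) auto
    hence "span (\<Union>j\<in>{m<..}. E j) \<subseteq> span (\<Union>j\<in>{n..}. E j)" by (rule span_mono)
    thus ?thesis using x by blast
  qed
  then obtain y where y: "\<And>n. y n \<in> span (\<Union>j\<in>{n..}. E j)" "\<And>n. norm (y n) \<le> 1"
    "\<And>n. r / 2 < \<bar>blinfun_apply f (y n)\<bar>"
    by metis
  have "bounded (range y)" unfolding bounded_iff using y(2) by blast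
  hence "weakly_null y" using wn y(1) by blast
  hence "(\<lambda>n. blinfun_apply f (y n)) \<longlonglongrightarrow> 0" unfolding weakly_null_def by blast
  then obtain no where "\<forall>n\<ge>no. norm (blinfun_apply f (y n) - 0) < r / 2"
    using LIMSEQ_D r(1) by (metis half_gt_zero)
  hence "\<bar>blinfun_apply f (y no)\<bar> < r / 2" by simp
  thus False using y(3)[of no] by simp
qed

theorem proposition2p1:
  fixes E :: "nat \<Rightarrow> 'a::banach set"
  assumes "separable_space TYPE('a)"
    and "FMD E"
  shows "(shrinking E \<longleftrightarrow>
            (\<forall>f::'a \<Rightarrow>\<^sub>L real. (\<lambda>n. restr_norm f (span (\<Union>j\<in>{n<..}. E j))) \<longlonglongrightarrow> 0))
       \<and> ((\<forall>f::'a \<Rightarrow>\<^sub>L real. (\<lambda>n. restr_norm f (span (\<Union>j\<in>{n<..}. E j))) \<longlonglongrightarrow> 0) \<longleftrightarrow>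
            (\<forall>y::nat \<Rightarrow> 'a. bounded (range y) \<and> (\<forall>n. y n \<in> span (\<Union>j\<in>{n..}. E j))
                \<longrightarrow> weakly_null y))"
proof (intro conjI iffI allI impI)
  fix f :: "'a \<Rightarrow>\<^sub>L real" assume "shrinking E"
  thus "(\<lambda>n. restr_norm f (span (\<Union>j\<in>{n<..}. E j))) \<longlonglongrightarrow> 0" by (rule shr_imp_2)
next
  assume "\<forall>f::'a \<Rightarrow>\<^sub>L real. (\<lambda>n. restr_norm f (span (\<Union>j\<in>{n<..}. E j))) \<longlonglongrightarrow> 0"
  thus "shrinking E" by (rule two_imp_shr[OF assms(2)])
next
  fix y :: "nat \<Rightarrow> 'a"
  assume "\<forall>f::'a \<Rightarrow>\<^sub>L real. (\<lambda>n. restr_norm f (span (\<Union>j\<in>{n<..}. E j))) \<longlonglongrightarrow> 0"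
    and "bounded (range y) \<and> (\<forall>n. y n \<in> span (\<Union>j\<in>{n..}. E j))"
  thus "weakly_null y" using two_imp_three by blast
next
  fix f :: "'a \<Rightarrow>\<^sub>L real"
  assume "\<forall>y::nat \<Rightarrow> 'a. bounded (range y) \<and> (\<forall>n. y n \<in> span (\<Union>j\<in>{n..}. E j)) \<longrightarrow> weakly_null y"
  thus "(\<lambda>n. restr_norm f (span (\<Union>j\<in>{n<..}. E j))) \<longlonglongrightarrow> 0" by (rule three_imp_two)
qed

end
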